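(* Let $X_1,\ldots,X_k\in\mathbf{M}_{2N}(\mathbb{C})$ commute pairwise and be self-dual ($X_j^\sharp=X_j$). Then there is a single symplectic unitary $U$ such that for all $j$, \[U^{*}X_jU=\begin{bmatrix}T_j&C_j\\0&T_j^{\mathrm T}\end{bmatrix}\] with each $T_j$ upper-triangular and each $C_j$ skew-symmetric ($N\times N$ blocks).
   Context: For $X\in\mathbf{M}_{2N}(\mathbb{C})$ in $N\times N$ blocks $X=\begin{bmatrix}A&B\\C&D\end{bmatrix}$, $X^{\sharp}=\begin{bmatrix}D^{\mathrm T}&-B^{\mathrm T}\\-C^{\mathrm T}&A^{\mathrm T}\end{bmatrix}$, equivalently $X^\sharp=-ZX^{\mathrm T}Z$ with $Z=\begin{bmatrix}0&I\\-I&0\end{bmatrix}$. A symplectic unitary is a unitary $U\in\mathbf{M}_{2N}(\mathbb{C})$ with $U^{\mathrm T}ZU=Z$. *)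

theory Defs
  imports "Jordan_Normal_Form.Schur_Decomposition"
begin

definition Zmat :: "nat \<Rightarrow> complex mat" where
  "Zmat N = four_block_mat (0\<^sub>m N N) (1\<^sub>m N) (- 1\<^sub>m N) (0\<^sub>m N N)"

definition sharp :: "nat \<Rightarrow> complex mat \<Rightarrow> complex mat" where
  "sharp N X = - (Zmat N * transpose_mat X * Zmat N)"

definition unitary_mat :: "nat \<Rightarrow> complex mat \<Rightarrow> bool" where
  "unitary_mat n U \<longleftrightarrow> U \<in> carrier_mat n n \<and> mat_adjoint U * U = 1\<^sub>m n"

definition symplectic_unitary :: "nat \<Rightarrow> complex mat \<Rightarrow> bool" where
  "symplectic_unitary N U \<longleftrightarrow> unitary_mat (2 * N) U \<and>
     transpose_mat U * Zmat N * U = Zmat N"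

end

theory Submission
  imports Defs
begin


definition subsp :: "nat \<Rightarrow> complex vec set \<Rightarrow> bool" where
  "subsp n S \<longleftrightarrow> S \<subseteq> carrier_vec n \<and> 0\<^sub>v n \<in> S \<and> (\<forall>x\<in>S. \<forall>y\<in>S. x + y \<in> S)
     \<and> (\<forall>a. \<forall>x\<in>S. a \<cdot>\<^sub>v x \<in> S)"

lemma subsp_minus: assumes "subsp n S" "x \<in> S" "y \<in> S" shows "x - y \<in> S"
proof -
  have c: "x \<in> carrier_vec n" "y \<in> carrier_vec n" using assms unfolding subsp_def by auto
  have "x - y = x + (-1) \<cdot>\<^sub>v y" using c by (intro eq_vecI) auto
  thus ?thesis using assms unfolding subsp_def by auto
qed

fun hvl :: "complex mat \<Rightarrow> complex list \<Rightarrow> complex vec \<Rightarrow> complex vec" where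
  "hvl A [] y = 0\<^sub>v (dim_vec y)"
| "hvl A (a # as) y = a \<cdot>\<^sub>v y + A *\<^sub>v hvl A as y"

definition hv :: "complex mat \<Rightarrow> complex poly \<Rightarrow> complex vec \<Rightarrow> complex vec" where
  "hv A p y = hvl A (coeffs p) y"

lemma hvl_carrier: "A \<in> carrier_mat n n \<Longrightarrow> y \<in> carrier_vec n \<Longrightarrow> hvl A as y \<in> carrier_vec n"
  by (induction as) auto

lemma hv_carrier: "A \<in> carrier_mat n n \<Longrightarrow> y \<in> carrier_vec n \<Longrightarrow> hv A p y \<in> carrier_vec n"
  unfolding hv_def by (rule hvl_carrier)

lemma hv_0: "y \<in> carrier_vec n \<Longrightarrow> hv A 0 y = 0\<^sub>v n"
  unfolding hv_def by auto

lemma hv_pCons: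
  assumes A: "A \<in> carrier_mat n n" and y: "y \<in> carrier_vec n"
  shows "hv A (pCons a p) y = a \<cdot>\<^sub>v y + A *\<^sub>v hv A p y"
proof (cases "a = 0 \<and> p = 0")
  case True
  then show ?thesis using A y unfolding hv_def by (intro eq_vecI) auto
next
  case False
  then have "coeffs (pCons a p) = a # coeffs p" by (auto simp: coeffs_pCons_eq_cCons cCons_def)
  then show ?thesis unfolding hv_def by simp
qed

lemma hv_add:
  assumes A: "A \<in> carrier_mat n n" and y: "y \<in> carrier_vec n"
  shows "hv A (p + q) y = hv A p y + hv A q y"
proof (induction p arbitrary: q rule: pCons_induct)
  case 0
  then show ?case using hv_carrier[OF A y] by (simp add: hv_0[OF y])
next
  case (pCons a p)
  obtain b q' where q: "q = pCons b q'" by (cases q) auto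
  have "hv A (pCons a p + q) y = hv A (pCons (a + b) (p + q')) y" using q by simp
  also have "\<dots> = (a + b) \<cdot>\<^sub>v y + A *\<^sub>v (hv A p y + hv A q' y)"
    using hv_pCons[OF A y] pCons.IH by simp
  also have "\<dots> = (a \<cdot>\<^sub>v y + A *\<^sub>v hv A p y) + (b \<cdot>\<^sub>v y + A *\<^sub>v hv A q' y)"
    using hv_carrier[OF A y] A y
    by (subst mult_add_distrib_mat_vec[of _ n n]) (auto intro!: eq_vecI simp: algebra_simps)
  finally show ?case using hv_pCons[OF A y] q by simp
qed

lemma hv_smult:
  assumes A: "A \<in> carrier_mat n n" and y: "y \<in> carrier_vec n"
  shows "hv A (smult c p) y = c \<cdot>\<^sub>v hv A p y"
proof (induction p rule: pCons_induct)
  case 0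
  then show ?case using y by (auto intro!: eq_vecI simp: hv_0)
next
  case (pCons a p)
  have "hv A (smult c (pCons a p)) y = (c * a) \<cdot>\<^sub>v y + A *\<^sub>v (c \<cdot>\<^sub>v hv A p y)"
    using hv_pCons[OF A y] pCons.IH by simp
  also have "\<dots> = c \<cdot>\<^sub>v (a \<cdot>\<^sub>v y + A *\<^sub>v hv A p y)"
    using hv_carrier[OF A y] A y
    by (subst mult_mat_vec[of _ n n]) (auto intro!: eq_vecI simp: algebra_simps)
  finally show ?case using hv_pCons[OF A y] by simp
qed

lemma hv_one: assumes A: "A \<in> carrier_mat n n" and y: "y \<in> carrier_vec n"
  shows "hv A 1 y = y"
proof -
  have "hv A (pCons 1 0) y = y" using hv_pCons[OF A y, of 1 0] hv_0[OF y] A y by (auto intro!: eq_vecI)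
  thus ?thesis by (simp add: one_pCons)
qed

lemma hv_lin:
  assumes A: "A \<in> carrier_mat n n" and y: "y \<in> carrier_vec n"
  shows "hv A ([:-\<mu>, 1:] * R) y = A *\<^sub>v hv A R y - \<mu> \<cdot>\<^sub>v hv A R y"
proof -
  have eq: "[:-\<mu>, 1:] * R = smult (-\<mu>) R + pCons 0 R" by (simp add: mult_pCons_left)
  have "hv A ([:-\<mu>, 1:] * R) y = hv A (smult (-\<mu>) R + pCons 0 R) y" by (subst eq) (rule refl)
  also have "\<dots> = hv A (smult (-\<mu>) R) y + hv A (pCons 0 R) y" by (rule hv_add[OF A y])
  also have "\<dots> = (-\<mu>) \<cdot>\<^sub>v hv A R y + (0 \<cdot>\<^sub>v y + A *\<^sub>v hv A R y)"
    by (simp only: hv_smult[OF A y] hv_pCons[OF A y])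
  also have "\<dots> = A *\<^sub>v hv A R y - \<mu> \<cdot>\<^sub>v hv A R y"
    using hv_carrier[OF A y, of R] A y by (intro eq_vecI) auto
  finally show ?thesis .
qed

lemma hv_in:
  assumes A: "A \<in> carrier_mat n n" and W: "subsp n W" and inv: "\<forall>x\<in>W. A *\<^sub>v x \<in> W"
    and y: "y \<in> W"
  shows "hv A p y \<in> W"
proof (induction p rule: pCons_induct)
  case 0
  have yc: "y \<in> carrier_vec n" using W y unfolding subsp_def by blast
  have "0\<^sub>v n \<in> W" using W unfolding subsp_def by blast
  then show ?case using hv_0[OF yc] by simp
next
  case (pCons a p)
  have yc: "y \<in> carrier_vec n" using W y by (auto simp: subsp_def)
  have 1: "a \<cdot>\<^sub>v y \<in> W" using W y unfolding subsp_def by blast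
  have 2: "A *\<^sub>v hv A p y \<in> W" using inv pCons.IH by blast
  have "a \<cdot>\<^sub>v y + A *\<^sub>v hv A p y \<in> W" using 1 2 W unfolding subsp_def by blast
  then show ?case using hv_pCons[OF A yc] by simp
qed

primrec pw :: "complex mat \<Rightarrow> nat \<Rightarrow> complex vec \<Rightarrow> complex vec" where
  "pw A 0 y = y"
| "pw A (Suc i) y = A *\<^sub>v pw A i y"

lemma pw_carrier: "A \<in> carrier_mat n n \<Longrightarrow> y \<in> carrier_vec n \<Longrightarrow> pw A i y \<in> carrier_vec n"
  by (induction i) auto


lemma hv_comp:
  assumes A: "A \<in> carrier_mat n n" and y: "y \<in> carrier_vec n"
  shows "\<forall>i\<ge>m. coeff p i = 0 \<Longrightarrow> r < n \<Longrightarrow> hv A p y $ r = (\<Sum>i<m. coeff p i * pw A i y $ r)"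
proof (induction p arbitrary: m r rule: pCons_induct)
  case 0
  have r: "r < n" by fact
  have "hv A 0 y = 0\<^sub>v n" by (rule hv_0[OF y])
  then show ?case using r by simp
next
  case (pCons a p)
  have r: "r < n" by fact
  show ?case
  proof (cases m)
    case 0
    have "\<forall>i. coeff (pCons a p) i = 0" using pCons.prems 0 by simp
    then have "pCons a p = 0" by (simp add: poly_eq_iff)
    then show ?thesis using pCons.hyps by simp
  next
    case (Suc m')
    have pr: "\<forall>i\<ge>m'. coeff p i = 0"
    proof (intro allI impI)
      fix i assume "m' \<le> i"
      hence "Suc i \<ge> m" using Suc by simp
      hence "coeff (pCons a p) (Suc i) = 0" using pCons.prems by blast
      thus "coeff p i = 0" by simp
    qed
    have IH: "hv A p y $ l = (\<Sum>i<m'. coeff p i * pw A i y $ l)" if "l < n" for l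
      using pCons.IH[OF pr that] .
    have mv: "(A *\<^sub>v v) $ r = (\<Sum>l<n. A $$ (r, l) * v $ l)" if "v \<in> carrier_vec n" for v
      using that A r unfolding mult_mat_vec_def scalar_prod_def
      by (simp add: lessThan_atLeast0)
    have hc: "hv A p y \<in> carrier_vec n" by (rule hv_carrier[OF A y])
    have "hv A (pCons a p) y $ r = (a \<cdot>\<^sub>v y + A *\<^sub>v hv A p y) $ r"
      by (simp only: hv_pCons[OF A y])
    also have "\<dots> = a * y $ r + (A *\<^sub>v hv A p y) $ r"
      using hc A y r by simp
    also have "(A *\<^sub>v hv A p y) $ r = (\<Sum>l<n. A $$ (r, l) * hv A p y $ l)"
      by (rule mv[OF hc])
    also have "\<dots> = (\<Sum>l<n. A $$ (r, l) * (\<Sum>i<m'. coeff p i * pw A i y $ l))"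
      by (rule sum.cong[OF refl]) (simp add: IH)
    also have "\<dots> = (\<Sum>l<n. \<Sum>i<m'. A $$ (r, l) * (coeff p i * pw A i y $ l))"
      by (simp only: sum_distrib_left)
    also have "\<dots> = (\<Sum>i<m'. \<Sum>l<n. A $$ (r, l) * (coeff p i * pw A i y $ l))"
      by (rule sum.swap)
    also have "\<dots> = (\<Sum>i<m'. coeff p i * (\<Sum>l<n. A $$ (r, l) * pw A i y $ l))"
      by (rule sum.cong[OF refl]) (simp add: sum_distrib_left mult.left_commute)
    also have "\<dots> = (\<Sum>i<m'. coeff p i * pw A (Suc i) y $ r)"
      by (rule sum.cong[OF refl]) (simp add: mv[OF pw_carrier[OF A y]])
    also have "a * y $ r + (\<Sum>i<m'. coeff p i * pw A (Suc i) y $ r) = (\<Sum>i<Suc m'. coeff (pCons a p) i * pw A i y $ r)"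
      by (subst sum.lessThan_Suc_shift) simp
    finally show ?thesis using Suc by simp
  qed
qed


lemma exists_annih:
  assumes A: "A \<in> carrier_mat n n" and y: "y \<in> carrier_vec n"
  shows "\<exists>p. p \<noteq> 0 \<and> hv A p y = 0\<^sub>v n"
proof -
  define K where "K = mat\<^sub>r (Suc n) (Suc n) (\<lambda>i. if i = n then 0\<^sub>v (Suc n) else vec (Suc n) (\<lambda>l. pw A l y $ i))"
  have Kc: "K \<in> carrier_mat (Suc n) (Suc n)" unfolding K_def by simp
  have "det K = 0" unfolding K_def by (rule det_row_0) auto
  then obtain v where v: "v \<in> carrier_vec (Suc n)" "v \<noteq> 0\<^sub>v (Suc n)" "K *\<^sub>v v = 0\<^sub>v (Suc n)"
    using det_0_iff_vec_prod_zero_field[OF Kc] by blast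
  define p where "p = (\<Sum>i<Suc n. monom (v $ i) i)"
  have cp: "coeff p i = (if i < Suc n then v $ i else 0)" for i
    unfolding p_def by (simp add: coeff_sum coeff_monom)
  have "p \<noteq> 0"
  proof
    assume "p = 0"
    hence "\<forall>i<Suc n. v $ i = 0" using cp by (metis coeff_0)
    hence "v = 0\<^sub>v (Suc n)" using v(1) by (intro eq_vecI) auto
    thus False using v(2) by simp
  qed
  moreover have "hv A p y = 0\<^sub>v n"
  proof (rule eq_vecI)
    fix r assume r: "r < dim_vec (0\<^sub>v n :: complex vec)"
    hence rn: "r < n" by simp
    have "hv A p y $ r = (\<Sum>i<Suc n. coeff p i * pw A i y $ r)"
      by (rule hv_comp[OF A y _ rn]) (simp add: cp)
    also have "\<dots> = (\<Sum>i<Suc n. K $$ (r, i) * v $ i)"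
      using rn by (intro sum.cong) (auto simp: cp K_def)
    also have "\<dots> = (K *\<^sub>v v) $ r"
      using Kc v(1) rn unfolding mult_mat_vec_def scalar_prod_def
      by (simp add: lessThan_atLeast0)
    also have "\<dots> = 0" using v(3) rn by simp
    finally show "hv A p y $ r = 0\<^sub>v n $ r" using rn by simp
  next
    show "dim_vec (hv A p y) = dim_vec (0\<^sub>v n :: complex vec)" using hv_carrier[OF A y] by simp
  qed
  ultimately show ?thesis by blast
qed


lemma single_eig:
  assumes A: "A \<in> carrier_mat n n" and V: "subsp n V" and W: "subsp n W" and VW: "V \<subseteq> W"
    and iV: "\<forall>x\<in>V. A *\<^sub>v x \<in> V" and iW: "\<forall>x\<in>W. A *\<^sub>v x \<in> W"
    and y: "y \<in> W" and yV: "y \<notin> V"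
  shows "\<exists>\<mu> z. z \<in> W \<and> z \<notin> V \<and> A *\<^sub>v z - \<mu> \<cdot>\<^sub>v z \<in> V"
proof -
  have Wc: "W \<subseteq> carrier_vec n" using W unfolding subsp_def by blast
  have chain: "\<forall>y\<in>W. hv A (\<Prod>a\<leftarrow>as. [:-a, 1:]) y \<in> V \<longrightarrow> y \<in> V \<or> (\<exists>\<mu> z. z \<in> W \<and> z \<notin> V \<and> A *\<^sub>v z - \<mu> \<cdot>\<^sub>v z \<in> V)" for as
  proof (induction as)
    case Nil
    show ?case using hv_one[OF A] Wc by auto
  next
    case (Cons a as)
    show ?case
    proof (intro ballI impI)
      fix y assume yW: "y \<in> W" and h: "hv A (\<Prod>a\<leftarrow>a # as. [:-a, 1:]) y \<in> V"
      have yc: "y \<in> carrier_vec n" using yW Wc by blast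
      let ?P = "\<Prod>a\<leftarrow>as. [:-a, 1:]"
      let ?z = "hv A ?P y"
      have zW: "?z \<in> W" by (rule hv_in[OF A W iW yW])
      have "hv A (\<Prod>a\<leftarrow>a # as. [:-a, 1:]) y = hv A ([:-a, 1:] * ?P) y" by simp
      also have "\<dots> = A *\<^sub>v ?z - a \<cdot>\<^sub>v ?z" by (rule hv_lin[OF A yc])
      finally have h2: "A *\<^sub>v ?z - a \<cdot>\<^sub>v ?z \<in> V" using h by simp
      show "y \<in> V \<or> (\<exists>\<mu> z. z \<in> W \<and> z \<notin> V \<and> A *\<^sub>v z - \<mu> \<cdot>\<^sub>v z \<in> V)"
      proof (cases "?z \<in> V")
        case True
        then show ?thesis using Cons.IH yW by blast
      next
        case False
        then show ?thesis using zW h2 by blast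
      qed
    qed
  qed
  have yc: "y \<in> carrier_vec n" using y Wc by blast
  obtain p where p: "p \<noteq> 0" "hv A p y = 0\<^sub>v n" using exists_annih[OF A yc] by blast
  obtain as where as: "smult (lead_coeff p) (\<Prod>a\<leftarrow>as. [:-a, 1:]) = p"
    using fundamental_theorem_algebra_factorized[of p] by blast
  let ?P = "\<Prod>a\<leftarrow>as. [:-a, 1:]"
  have lc: "lead_coeff p \<noteq> 0" using p(1) by simp
  have h: "lead_coeff p \<cdot>\<^sub>v hv A ?P y = 0\<^sub>v n" using hv_smult[OF A yc, of "lead_coeff p" ?P] as p(2) by simp
  have hc: "hv A ?P y \<in> carrier_vec n" by (rule hv_carrier[OF A yc])
  have "hv A ?P y = 0\<^sub>v n"
  proof (rule eq_vecI)
    fix i assume "i < dim_vec (0\<^sub>v n :: complex vec)"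
    hence i: "i < n" by simp
    have "(lead_coeff p \<cdot>\<^sub>v hv A ?P y) $ i = 0" using h i by simp
    hence "lead_coeff p * hv A ?P y $ i = 0" using hc i by simp
    thus "hv A ?P y $ i = 0\<^sub>v n $ i" using lc i by simp
  qed (use hc in simp)
  hence "hv A ?P y \<in> V" using V unfolding subsp_def by simp
  thus ?thesis using chain[of as] y yV by blast
qed


lemma common_eig:
  fixes A :: "nat \<Rightarrow> complex mat"
  shows "(\<forall>j<k. A j \<in> carrier_mat n n) \<Longrightarrow> (\<forall>i<k. \<forall>j<k. A i * A j = A j * A i) \<Longrightarrow>
    subsp n V \<Longrightarrow> (\<forall>j<k. \<forall>x\<in>V. A j *\<^sub>v x \<in> V) \<Longrightarrow>
    subsp n W \<Longrightarrow> V \<subseteq> W \<Longrightarrow> (\<forall>j<k. \<forall>x\<in>W. A j *\<^sub>v x \<in> W) \<Longrightarrow> y \<in> W \<Longrightarrow> y \<notin> V \<Longrightarrow>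
    \<exists>x\<in>W. x \<notin> V \<and> (\<forall>j<k. \<exists>\<mu>. A j *\<^sub>v x - \<mu> \<cdot>\<^sub>v x \<in> V)"
proof (induction k arbitrary: W y)
  case 0
  then show ?case by blast
next
  case (Suc k)
  have Ak: "A k \<in> carrier_mat n n" using Suc.prems(1) by simp
  have Wc: "W \<subseteq> carrier_vec n" using Suc.prems(5) unfolding subsp_def by blast
  have Vc: "V \<subseteq> carrier_vec n" using Suc.prems(3) unfolding subsp_def by blast
  obtain \<mu> z where z: "z \<in> W" "z \<notin> V" "A k *\<^sub>v z - \<mu> \<cdot>\<^sub>v z \<in> V"
    using single_eig[OF Ak Suc.prems(3) Suc.prems(5) Suc.prems(6)] Suc.prems(4,7,8,9) by blast
  define W1 where "W1 = {x \<in> W. A k *\<^sub>v x - \<mu> \<cdot>\<^sub>v x \<in> V}"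
  have V: "subsp n V" by fact
  have W: "subsp n W" by fact
  have lin_add: "A k *\<^sub>v (x + y) - \<mu> \<cdot>\<^sub>v (x + y) = (A k *\<^sub>v x - \<mu> \<cdot>\<^sub>v x) + (A k *\<^sub>v y - \<mu> \<cdot>\<^sub>v y)"
    if "x \<in> carrier_vec n" "y \<in> carrier_vec n" for x y
    using that Ak by (subst mult_add_distrib_mat_vec[OF Ak that]) (auto intro!: eq_vecI simp: algebra_simps)
  have lin_smult: "A k *\<^sub>v (a \<cdot>\<^sub>v x) - \<mu> \<cdot>\<^sub>v (a \<cdot>\<^sub>v x) = a \<cdot>\<^sub>v (A k *\<^sub>v x - \<mu> \<cdot>\<^sub>v x)"
    if "x \<in> carrier_vec n" for x a
    using that Ak by (subst mult_mat_vec[OF Ak that]) (auto intro!: eq_vecI simp: algebra_simps)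
  have lin_0: "A k *\<^sub>v 0\<^sub>v n - \<mu> \<cdot>\<^sub>v 0\<^sub>v n = 0\<^sub>v n" using Ak by (auto intro!: eq_vecI)
  have W1: "subsp n W1"
    unfolding subsp_def W1_def
  proof (intro conjI ballI allI)
    show "{x \<in> W. A k *\<^sub>v x - \<mu> \<cdot>\<^sub>v x \<in> V} \<subseteq> carrier_vec n" using Wc by blast
    show "0\<^sub>v n \<in> {x \<in> W. A k *\<^sub>v x - \<mu> \<cdot>\<^sub>v x \<in> V}" using lin_0 V W unfolding subsp_def by simp
  next
    fix x y assume x: "x \<in> {x \<in> W. A k *\<^sub>v x - \<mu> \<cdot>\<^sub>v x \<in> V}" and y: "y \<in> {x \<in> W. A k *\<^sub>v x - \<mu> \<cdot>\<^sub>v x \<in> V}"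
    have xc: "x \<in> carrier_vec n" "y \<in> carrier_vec n" using x y Wc by auto
    have "(A k *\<^sub>v x - \<mu> \<cdot>\<^sub>v x) + (A k *\<^sub>v y - \<mu> \<cdot>\<^sub>v y) \<in> V" using x y V unfolding subsp_def by auto
    moreover have "x + y \<in> W" using x y W unfolding subsp_def by auto
    ultimately show "x + y \<in> {x \<in> W. A k *\<^sub>v x - \<mu> \<cdot>\<^sub>v x \<in> V}"
      using lin_add[OF xc] by simp
  next
    fix a x assume x: "x \<in> {x \<in> W. A k *\<^sub>v x - \<mu> \<cdot>\<^sub>v x \<in> V}"
    have xc: "x \<in> carrier_vec n" using x Wc by auto
    have "a \<cdot>\<^sub>v (A k *\<^sub>v x - \<mu> \<cdot>\<^sub>v x) \<in> V" using x V unfolding subsp_def by auto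
    moreover have "a \<cdot>\<^sub>v x \<in> W" using x W unfolding subsp_def by auto
    ultimately show "a \<cdot>\<^sub>v x \<in> {x \<in> W. A k *\<^sub>v x - \<mu> \<cdot>\<^sub>v x \<in> V}"
      using lin_smult[OF xc] by simp
  qed
  have VW1: "V \<subseteq> W1"
  proof
    fix x assume x: "x \<in> V"
    have "A k *\<^sub>v x \<in> V" using Suc.prems(4) x by simp
    moreover have "\<mu> \<cdot>\<^sub>v x \<in> V" using V x unfolding subsp_def by blast
    ultimately have "A k *\<^sub>v x - \<mu> \<cdot>\<^sub>v x \<in> V" using subsp_minus[OF V] by blast
    thus "x \<in> W1" unfolding W1_def using x Suc.prems(6) by blast
  qed
  have iW1: "\<forall>j<k. \<forall>x\<in>W1. A j *\<^sub>v x \<in> W1"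
  proof (intro allI impI ballI)
    fix j x assume j: "j < k" and x: "x \<in> W1"
    have Aj: "A j \<in> carrier_mat n n" using Suc.prems(1) j by simp
    have xW: "x \<in> W" and xc: "x \<in> carrier_vec n" and xe: "A k *\<^sub>v x - \<mu> \<cdot>\<^sub>v x \<in> V"
      using x Wc unfolding W1_def by auto
    have comm: "A k *\<^sub>v (A j *\<^sub>v x) = A j *\<^sub>v (A k *\<^sub>v x)"
    proof -
      have "A k *\<^sub>v (A j *\<^sub>v x) = (A k * A j) *\<^sub>v x" using Ak Aj xc by (simp add: assoc_mult_mat_vec)
      also have "A k * A j = A j * A k" using Suc.prems(2) j by simp
      also have "(A j * A k) *\<^sub>v x = A j *\<^sub>v (A k *\<^sub>v x)" using Ak Aj xc by (simp add: assoc_mult_mat_vec)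
      finally show ?thesis .
    qed
    have "A k *\<^sub>v (A j *\<^sub>v x) - \<mu> \<cdot>\<^sub>v (A j *\<^sub>v x) = A j *\<^sub>v (A k *\<^sub>v x - \<mu> \<cdot>\<^sub>v x)"
      unfolding comm using Ak Aj xc
      by (subst mult_minus_distrib_mat_vec[OF Aj], auto simp: mult_mat_vec[OF Aj xc])
    moreover have "A j *\<^sub>v (A k *\<^sub>v x - \<mu> \<cdot>\<^sub>v x) \<in> V" using Suc.prems(4) j xe by simp
    moreover have "A j *\<^sub>v x \<in> W" using Suc.prems(7) j xW by simp
    ultimately show "A j *\<^sub>v x \<in> W1" unfolding W1_def by simp
  qed
  have zW1: "z \<in> W1" unfolding W1_def using z by blast
  obtain x where x: "x \<in> W1" "x \<notin> V" "\<forall>j<k. \<exists>\<mu>. A j *\<^sub>v x - \<mu> \<cdot>\<^sub>v x \<in> V"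
    using Suc.IH[OF _ _ Suc.prems(3) _ W1 VW1 iW1 zW1 z(2)] Suc.prems(1,2,4) by auto
  have "\<forall>j<Suc k. \<exists>\<mu>. A j *\<^sub>v x - \<mu> \<cdot>\<^sub>v x \<in> V"
    using x(1,3) unfolding W1_def by (auto simp: less_Suc_eq)
  moreover have "x \<in> W" using x(1) unfolding W1_def by blast
  ultimately show ?case using x(2) by blast
qed


lemma sum_split2: fixes f :: "nat \<Rightarrow> 'a::comm_monoid_add" shows "(\<Sum>i<2*(N::nat). f i) = (\<Sum>i<N. f i) + (\<Sum>i<N. f (N+i))"
proof -
  have "{..<2*N} = {..<N} \<union> {N..<N+N}" by auto
  hence "(\<Sum>i<2*N. f i) = (\<Sum>i<N. f i) + (\<Sum>i\<in>{N..<N+N}. f i)"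
    by (simp add: sum.union_disjoint ivl_disj_int)
  also have "(\<Sum>i\<in>{N..<N+N}. f i) = (\<Sum>i<N. f (N+i))"
    using sum.shift_bounds_nat_ivl[of f 0 N N] by (simp add: lessThan_atLeast0 add.commute)
  finally show ?thesis .
qed

definition lc :: "nat \<Rightarrow> (nat \<Rightarrow> complex vec) \<Rightarrow> nat \<Rightarrow> (nat \<Rightarrow> complex) \<Rightarrow> complex vec" where
  "lc n w m c = vec n (\<lambda>r. \<Sum>i<m. c i * w i $ r)"
definition ip :: "nat \<Rightarrow> complex vec \<Rightarrow> complex vec \<Rightarrow> complex" where
  "ip n x y = (\<Sum>r<n. cnj (x $ r) * y $ r)"
definition om :: "nat \<Rightarrow> complex vec \<Rightarrow> complex vec \<Rightarrow> complex" where
  "om N x y = (\<Sum>i<N. x $ i * y $ (N+i) - x $ (N+i) * y $ i)"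
definition Jv :: "nat \<Rightarrow> complex vec \<Rightarrow> complex vec" where
  "Jv N x = vec (2*N) (\<lambda>i. if i < N then - cnj (x $ (N+i)) else cnj (x $ (i-N)))"

lemma lc_carrier[simp]: "lc n w m c \<in> carrier_vec n" unfolding lc_def by simp
lemma lc_index[simp]: "r < n \<Longrightarrow> lc n w m c $ r = (\<Sum>i<m. c i * w i $ r)" unfolding lc_def by simp
lemma lc_dim[simp]: "dim_vec (lc n w m c) = n" unfolding lc_def by simp

lemma lc_cong: "(\<And>i. i < m \<Longrightarrow> w i = w' i) \<Longrightarrow> lc n w m c = lc n w' m c"
  unfolding lc_def by (intro eq_vecI) auto

lemma lc_add: "lc n w m c + lc n w m d = lc n w m (\<lambda>i. c i + d i)"
  by (intro eq_vecI) (auto simp: sum.distrib algebra_simps)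

lemma lc_smult: "a \<cdot>\<^sub>v lc n w m c = lc n w m (\<lambda>i. a * c i)"
  by (intro eq_vecI) (auto simp: sum_distrib_left algebra_simps)

lemma lc_zero: "lc n w m (\<lambda>i. 0) = 0\<^sub>v n"
  by (intro eq_vecI) auto

lemma lc_extend: "m \<le> m' \<Longrightarrow> lc n w m c = lc n w m' (\<lambda>i. if i < m then c i else 0)"
proof (intro eq_vecI)
  fix r assume m: "m \<le> m'" and r: "r < dim_vec (lc n w m' (\<lambda>i. if i < m then c i else 0))"
  have "(\<Sum>i<m'. (if i < m then c i else 0) * w i $ r) = (\<Sum>i<m. (if i < m then c i else 0) * w i $ r)"
    using m by (intro sum.mono_neutral_right) auto
  thus "lc n w m c $ r = lc n w m' (\<lambda>i. if i < m then c i else 0) $ r" using r by simp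
qed simp

lemma lc_Suc: "w m \<in> carrier_vec n \<Longrightarrow> lc n w (Suc m) c = lc n w m c + c m \<cdot>\<^sub>v w m"
  by (intro eq_vecI) auto

lemma mat_lc: assumes A: "A \<in> carrier_mat n n" and w: "\<forall>i<m. w i \<in> carrier_vec n"
  shows "A *\<^sub>v lc n w m c = lc n (\<lambda>i. A *\<^sub>v w i) m c"
proof (intro eq_vecI)
  fix r assume "r < dim_vec (lc n (\<lambda>i. A *\<^sub>v w i) m c)"
  hence r: "r < n" by simp
  have "(A *\<^sub>v lc n w m c) $ r = (\<Sum>s<n. A $$ (r, s) * (\<Sum>i<m. c i * w i $ s))"
    using A r unfolding mult_mat_vec_def scalar_prod_def by (simp add: lessThan_atLeast0)
  also have "\<dots> = (\<Sum>i<m. c i * (\<Sum>s<n. A $$ (r, s) * w i $ s))"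
    by (simp add: sum_distrib_left mult.left_commute sum.swap[of _ "{..<n}"])
  also have "\<dots> = (\<Sum>i<m. c i * (A *\<^sub>v w i) $ r)"
    using A r w unfolding mult_mat_vec_def scalar_prod_def by (intro sum.cong) (auto simp: lessThan_atLeast0)
  finally show "(A *\<^sub>v lc n w m c) $ r = lc n (\<lambda>i. A *\<^sub>v w i) m c $ r" using r by simp
qed (use A in simp)

lemma lc_lc: assumes "\<forall>i<m. w i = lc n u b (d i)"
  shows "lc n w m c = lc n u b (\<lambda>l. \<Sum>i<m. c i * d i l)"
proof (intro eq_vecI)
  fix r assume "r < dim_vec (lc n u b (\<lambda>l. \<Sum>i<m. c i * d i l))"
  hence r: "r < n" by simp
  have "lc n w m c $ r = (\<Sum>i<m. c i * (\<Sum>l<b. d i l * u l $ r))"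
    using r assms by (auto intro!: sum.cong)
  also have "\<dots> = (\<Sum>l<b. (\<Sum>i<m. c i * d i l) * u l $ r)"
    by (simp add: sum_distrib_left sum_distrib_right mult.assoc sum.swap[of _ "{..<m}"])
  finally show "lc n w m c $ r = lc n u b (\<lambda>l. \<Sum>i<m. c i * d i l) $ r" using r by simp
qed simp

lemma ip_lc: "ip n x (lc n w m c) = (\<Sum>i<m. c i * ip n x (w i))"
  unfolding ip_def by (simp add: sum_distrib_left mult.left_commute sum.swap[of _ "{..<n}"])

lemma om_lc: "om N x (lc (2*N) w m c) = (\<Sum>i<m. c i * om N x (w i))"
  unfolding om_def by (simp add: sum_distrib_left algebra_simps sum_subtractf sum.swap[of _ "{..<N}"])

lemma om_lc_left: "om N (lc (2*N) w m c) y = (\<Sum>i<m. c i * om N (w i) y)"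
  unfolding om_def by (simp add: sum_distrib_left sum_distrib_right algebra_simps sum_subtractf sum.swap[of _ "{..<N}"])

lemma ip_cnj: "ip n x y = cnj (ip n y x)"
  unfolding ip_def by (simp add: mult.commute)

lemma om_antisym: "om N x y = - om N y x"
  unfolding om_def by (simp add: sum_negf[symmetric] algebra_simps)

lemma om_self: "om N x x = 0"
  using om_antisym[of N x x] by simp

lemma ip_add2: "x \<in> carrier_vec n \<Longrightarrow> y \<in> carrier_vec n \<Longrightarrow> ip n a (x + y) = ip n a x + ip n a y"
  unfolding ip_def by (simp add: sum.distrib algebra_simps)
lemma ip_minus2: "x \<in> carrier_vec n \<Longrightarrow> y \<in> carrier_vec n \<Longrightarrow> ip n a (x - y) = ip n a x - ip n a y"
  unfolding ip_def by (simp add: sum_subtractf algebra_simps)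
lemma ip_smult2: "x \<in> carrier_vec n \<Longrightarrow> ip n a (c \<cdot>\<^sub>v x) = c * ip n a x"
  unfolding ip_def by (simp add: sum_distrib_left algebra_simps)
lemma om_add2: "x \<in> carrier_vec (2*N) \<Longrightarrow> y \<in> carrier_vec (2*N) \<Longrightarrow> om N a (x + y) = om N a x + om N a y"
  unfolding om_def by (simp add: sum.distrib algebra_simps sum_subtractf)
lemma om_smult2: "x \<in> carrier_vec (2*N) \<Longrightarrow> om N a (c \<cdot>\<^sub>v x) = c * om N a x"
  unfolding om_def by (simp add: sum_distrib_left algebra_simps sum_subtractf)
lemma om_zero2: "om N a (0\<^sub>v (2*N)) = 0"
  unfolding om_def by simp

lemma cnj_mult_self: "cnj z * z = complex_of_real ((cmod z)^2)"
  by (metis complex_norm_square mult.commute)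

lemma ip_self_real: "ip n x x = complex_of_real (\<Sum>r<n. (cmod (x $ r))^2)"
  unfolding ip_def of_real_sum by (intro sum.cong) (auto simp only: cnj_mult_self)

lemma ip_self_zero: assumes x: "x \<in> carrier_vec n" and z: "ip n x x = 0" shows "x = 0\<^sub>v n"
proof -
  have "(\<Sum>r<n. (cmod (x $ r))^2) = 0" using z ip_self_real[of n x] by (metis of_real_eq_0_iff)
  hence "\<forall>r\<in>{..<n}. (cmod (x $ r))^2 = 0" by (subst sum_nonneg_eq_0_iff[symmetric]) auto
  thus ?thesis using x by (intro eq_vecI) auto
qed

lemma Jv_carrier[simp]: "Jv N x \<in> carrier_vec (2*N)" unfolding Jv_def by simp
lemma Jv_dim[simp]: "dim_vec (Jv N x) = 2*N" unfolding Jv_def by simp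
lemma Jv_lo: "i < N \<Longrightarrow> Jv N x $ i = - cnj (x $ (N+i))" unfolding Jv_def by simp
lemma Jv_hi: "i < N \<Longrightarrow> Jv N x $ (N+i) = cnj (x $ i)" unfolding Jv_def by simp
lemma Jv_hi': "i < N \<Longrightarrow> Jv N x $ (i+N) = cnj (x $ i)" unfolding Jv_def by simp

lemma ipJJ: "ip (2*N) (Jv N x) (Jv N y) = cnj (ip (2*N) x y)"
  unfolding ip_def sum_split2 by (simp add: Jv_lo Jv_hi Jv_hi' algebra_simps)
lemma ip_xJ: "ip (2*N) x (Jv N y) = - cnj (om N x y)"
  unfolding ip_def om_def sum_split2 by (simp add: Jv_lo Jv_hi Jv_hi' algebra_simps sum_subtractf sum_negf)
lemma ip_Jx: "ip (2*N) (Jv N y) x = om N y x"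
  using ip_xJ[of N x y] ip_cnj[of "2*N" "Jv N y" x] om_antisym[of N x y] by simp
lemma omJJ: "om N (Jv N x) (Jv N y) = cnj (om N x y)"
  unfolding om_def by (simp add: Jv_lo Jv_hi Jv_hi' algebra_simps sum_subtractf)
lemma om_xJ: "om N x (Jv N y) = ip (2*N) y x"
  unfolding ip_def om_def sum_split2 by (simp add: Jv_lo Jv_hi Jv_hi' algebra_simps sum.distrib)
lemma ip_om_J: "ip (2*N) x z = - om N (Jv N x) z"
  unfolding ip_def om_def sum_split2 by (simp add: Jv_lo Jv_hi Jv_hi' algebra_simps sum.distrib sum_negf sum_subtractf)


lemma if_mult_distrib: "(if P then a else b) * (x::complex) = (if P then a * x else b * x)" by simp

lemma Zmat_dims[simp]: "dim_row (Zmat N) = 2*N" "dim_col (Zmat N) = 2*N"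
  unfolding Zmat_def by (auto simp: four_block_mat_def Let_def)

lemma Zmat_carrier[simp]: "Zmat N \<in> carrier_mat (2*N) (2*N)"
  using Zmat_dims by (intro carrier_matI) auto

lemma Zmat_entry: "r < 2*N \<Longrightarrow> c < 2*N \<Longrightarrow>
  Zmat N $$ (r, c) = (if r < N then (if c = N + r then 1 else 0) else (if c + N = r then -1 else 0))"
  unfolding Zmat_def four_block_mat_def Let_def by auto

lemma mult_entry: assumes A: "A \<in> carrier_mat n m" and B: "B \<in> carrier_mat m p" and i: "i < n" and j: "j < p"
  shows "(A * B) $$ (i, j) = (\<Sum>s<m. A $$ (i, s) * B $$ (s, j))"
  using A B i j by (simp add: scalar_prod_def lessThan_atLeast0)

lemma mv_entry: assumes A: "A \<in> carrier_mat n m" and v: "v \<in> carrier_vec m" and i: "i < n"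
  shows "(A *\<^sub>v v) $ i = (\<Sum>s<m. A $$ (i, s) * v $ s)"
  using A v i by (simp add: scalar_prod_def lessThan_atLeast0)

lemma Zrow_lo: "r < N \<Longrightarrow> s < 2*N \<Longrightarrow> Zmat N $$ (r, s) = (if s = N + r then 1 else 0)"
  using Zmat_entry[of r N s] by simp
lemma Zrow_hi: "N \<le> r \<Longrightarrow> r < 2*N \<Longrightarrow> s < 2*N \<Longrightarrow> Zmat N $$ (r, s) = (if s = r - N then -1 else 0)"
  using Zmat_entry[of r N s] by auto

lemma Zsum: assumes r: "r < 2*N"
  shows "(\<Sum>s<2*N. Zmat N $$ (r, s) * f s) = (if r < N then f (N + r) else - f (r - N))"
proof -
  have "(\<Sum>s<2*N. Zmat N $$ (r, s) * f s) = (\<Sum>i<N. Zmat N $$ (r, i) * f i) + (\<Sum>i<N. Zmat N $$ (r, N+i) * f (N+i))"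
    by (rule sum_split2)
  also have "\<dots> = (if r < N then f (N + r) else - f (r - N))"
  proof (cases "r < N")
    case True
    have "(\<Sum>i<N. Zmat N $$ (r, i) * f i) = 0" using True by (intro sum.neutral) (auto simp: Zrow_lo)
    moreover have "(\<Sum>i<N. Zmat N $$ (r, N+i) * f (N+i)) = (\<Sum>i<N. if i = r then f (N+i) else 0)"
      using True by (intro sum.cong) (auto simp: Zrow_lo)
    ultimately show ?thesis using True by simp
  next
    case False
    have "(\<Sum>i<N. Zmat N $$ (r, i) * f i) = (\<Sum>i<N. if i = r - N then - f i else 0)"
      using False r by (intro sum.cong) (auto simp: Zrow_hi)
    moreover have "(\<Sum>i<N. Zmat N $$ (r, N+i) * f (N+i)) = 0" using False r by (intro sum.neutral) (auto simp: Zrow_hi)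
    ultimately show ?thesis using False r by simp
  qed
  finally show ?thesis .
qed

lemma Zsum_col: assumes c: "c < 2*N"
  shows "(\<Sum>s<2*N. f s * Zmat N $$ (s, c)) = (if c < N then - f (N + c) else f (c - N))"
proof -
  have "(\<Sum>s<2*N. f s * Zmat N $$ (s, c)) = (\<Sum>i<N. f i * Zmat N $$ (i, c)) + (\<Sum>i<N. f (N+i) * Zmat N $$ (N+i, c))"
    by (rule sum_split2)
  also have "\<dots> = (if c < N then - f (N + c) else f (c - N))"
  proof (cases "c < N")
    case True
    have "(\<Sum>i<N. f i * Zmat N $$ (i, c)) = 0" using True c by (intro sum.neutral) (auto simp: Zrow_lo)
    moreover have "(\<Sum>i<N. f (N+i) * Zmat N $$ (N+i, c)) = (\<Sum>i<N. if i = c then - f (N+i) else 0)"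
      using True c by (intro sum.cong) (auto simp: Zrow_hi)
    ultimately show ?thesis using True by simp
  next
    case False
    have "(\<Sum>i<N. f i * Zmat N $$ (i, c)) = (\<Sum>i<N. if i = c - N then f i else 0)"
      using False c by (intro sum.cong) (auto simp: Zrow_lo)
    moreover have "(\<Sum>i<N. f (N+i) * Zmat N $$ (N+i, c)) = 0" using False c by (intro sum.neutral) (auto simp: Zrow_hi)
    ultimately show ?thesis using False c by simp
  qed
  finally show ?thesis .
qed

lemma Zl: assumes M: "M \<in> carrier_mat (2*N) m" and r: "r < 2*N" and c: "c < m"
  shows "(Zmat N * M) $$ (r, c) = (if r < N then M $$ (N + r, c) else - M $$ (r - N, c))"
  using mult_entry[OF Zmat_carrier M r c] Zsum[OF r, of "\<lambda>s. M $$ (s, c)"] by simp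

lemma Zr: assumes M: "M \<in> carrier_mat m (2*N)" and r: "r < m" and c: "c < 2*N"
  shows "(M * Zmat N) $$ (r, c) = (if c < N then - M $$ (r, N + c) else M $$ (r, c - N))"
  using mult_entry[OF M Zmat_carrier r c] Zsum_col[OF c, of "\<lambda>s. M $$ (r, s)"] by simp

lemma Zv: assumes y: "y \<in> carrier_vec (2*N)" and r: "r < 2*N"
  shows "(Zmat N *\<^sub>v y) $ r = (if r < N then y $ (N + r) else - y $ (r - N))"
  using mv_entry[OF Zmat_carrier y r] Zsum[OF r, of "\<lambda>s. y $ s"] by simp

lemma om_Z: assumes x: "x \<in> carrier_vec (2*N)" and y: "y \<in> carrier_vec (2*N)"
  shows "om N x y = x \<bullet> (Zmat N *\<^sub>v y)"
proof -
  have "x \<bullet> (Zmat N *\<^sub>v y) = (\<Sum>r<2*N. x $ r * (Zmat N *\<^sub>v y) $ r)"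
    using x unfolding scalar_prod_def by (simp add: lessThan_atLeast0)
  also have "\<dots> = (\<Sum>i<N. x $ i * (Zmat N *\<^sub>v y) $ i) + (\<Sum>i<N. x $ (N+i) * (Zmat N *\<^sub>v y) $ (N+i))"
    by (rule sum_split2)
  also have "\<dots> = (\<Sum>i<N. x $ i * y $ (N+i)) + (\<Sum>i<N. x $ (N+i) * - y $ i)"
  proof (intro arg_cong2[where f="(+)"] sum.cong refl)
    fix i assume "i \<in> {..<N}"
    thus "x $ i * (Zmat N *\<^sub>v y) $ i = x $ i * y $ (N+i)" by (subst Zv[OF y]) auto
    show "x $ (N+i) * (Zmat N *\<^sub>v y) $ (N+i) = x $ (N+i) * - y $ i" using \<open>i \<in> {..<N}\<close> by (subst Zv[OF y]) auto
  qed
  also have "\<dots> = om N x y"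
    unfolding om_def by (simp add: sum_subtractf sum_negf)
  finally show ?thesis by simp
qed

lemma sharp_entry: assumes X: "X \<in> carrier_mat (2*N) (2*N)" and a: "a < 2*N" and b: "b < 2*N"
  shows "sharp N X $$ (a, b) = (if b < N then (if a < N then X $$ (N+b, N+a) else - X $$ (N+b, a-N))
     else (if a < N then - X $$ (b-N, N+a) else X $$ (b-N, a-N)))"
proof -
  have ZXT: "Zmat N * transpose_mat X \<in> carrier_mat (2*N) (2*N)"
    using X by (intro mult_carrier_mat[OF Zmat_carrier]) simp
  have "sharp N X $$ (a, b) = - ((Zmat N * transpose_mat X) * Zmat N) $$ (a, b)"
    unfolding sharp_def using X a b by simp
  also have "\<dots> = - (if b < N then - (Zmat N * transpose_mat X) $$ (a, N + b) else (Zmat N * transpose_mat X) $$ (a, b - N))"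
    using Zr[OF ZXT a b] by simp
  also have "\<dots> = (if b < N then (if a < N then X $$ (N+b, N+a) else - X $$ (N+b, a-N))
     else (if a < N then - X $$ (b-N, N+a) else X $$ (b-N, a-N)))"
  proof -
    have XT: "transpose_mat X \<in> carrier_mat (2*N) (2*N)" using X by simp
    have ZX1: "(Zmat N * transpose_mat X) $$ (a, s) = (if a < N then X $$ (s, N+a) else - X $$ (s, a-N))"
      if s: "s < 2*N" for s
      using Zl[OF XT a s] X a s by auto
    show ?thesis using b by (cases "b < N") (simp_all add: ZX1)
  qed
  finally show ?thesis .
qed

lemma selfdual_comm: assumes X: "X \<in> carrier_mat (2*N) (2*N)" and sd: "sharp N X = X"
  shows "Zmat N * X = transpose_mat X * Zmat N"
proof (rule eq_matI)
  fix r c assume r: "r < dim_row (transpose_mat X * Zmat N)" and c: "c < dim_col (transpose_mat X * Zmat N)"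
  hence r: "r < 2*N" and c: "c < 2*N" using X by auto
  have E: "X $$ (a, b) = (if b < N then (if a < N then X $$ (N+b, N+a) else - X $$ (N+b, a-N))
     else (if a < N then - X $$ (b-N, N+a) else X $$ (b-N, a-N)))" if "a < 2*N" "b < 2*N" for a b
    using sharp_entry[OF X that] sd by simp
  have L: "(Zmat N * X) $$ (r, c) = (if r < N then X $$ (N + r, c) else - X $$ (r - N, c))"
    by (rule Zl[OF X r c])
  have R: "(transpose_mat X * Zmat N) $$ (r, c) = (if c < N then - X $$ (N + c, r) else X $$ (c - N, r))"
    using Zr[of "transpose_mat X" "2*N" N r c] X r c by simp
  show "(Zmat N * X) $$ (r, c) = (transpose_mat X * Zmat N) $$ (r, c)"
    unfolding L R using r c E[of "N+r" c] E[of "r-N" c] by auto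
qed (use X in auto)

lemma om_sym: assumes X: "X \<in> carrier_mat (2*N) (2*N)" and sd: "sharp N X = X"
  and x: "x \<in> carrier_vec (2*N)" and y: "y \<in> carrier_vec (2*N)"
  shows "om N x (X *\<^sub>v y) = om N (X *\<^sub>v x) y"
proof -
  have ZY0: "Zmat N *\<^sub>v y \<in> carrier_vec (2*N)" by (rule mult_mat_vec_carrier[OF Zmat_carrier y])
  have Xx0: "X *\<^sub>v x \<in> carrier_vec (2*N)" by (rule mult_mat_vec_carrier[OF X x])
  have "om N x (X *\<^sub>v y) = x \<bullet> (Zmat N *\<^sub>v (X *\<^sub>v y))" using om_Z[OF x] X y by simp
  also have "Zmat N *\<^sub>v (X *\<^sub>v y) = (Zmat N * X) *\<^sub>v y" using assoc_mult_mat_vec[OF Zmat_carrier X y] by simp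
  also have "\<dots> = (transpose_mat X * Zmat N) *\<^sub>v y" using selfdual_comm[OF X sd] by simp
  also have "\<dots> = transpose_mat X *\<^sub>v (Zmat N *\<^sub>v y)" using assoc_mult_mat_vec[OF _ Zmat_carrier y, of "transpose_mat X"] X by simp
  also have "x \<bullet> (transpose_mat X *\<^sub>v (Zmat N *\<^sub>v y)) = (transpose_mat X *\<^sub>v (Zmat N *\<^sub>v y)) \<bullet> x"
  proof -
    have ZY: "Zmat N *\<^sub>v y \<in> carrier_vec (2*N)" by (rule mult_mat_vec_carrier[OF Zmat_carrier y])
    have XT: "transpose_mat X \<in> carrier_mat (2*N) (2*N)" using X by simp
    have c1: "transpose_mat X *\<^sub>v (Zmat N *\<^sub>v y) \<in> carrier_vec (2*N)" by (rule mult_mat_vec_carrier[OF XT ZY])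
    show ?thesis by (rule comm_scalar_prod[OF x c1])
  qed
  also have "\<dots> = (Zmat N *\<^sub>v y) \<bullet> (X *\<^sub>v x)"
    by (rule transpose_vec_mult_scalar[OF X x ZY0])
  also have "\<dots> = (X *\<^sub>v x) \<bullet> (Zmat N *\<^sub>v y)"
    by (rule comm_scalar_prod[OF ZY0 Xx0])
  also have "\<dots> = om N (X *\<^sub>v x) y"
  proof -
    have Xx: "X *\<^sub>v x \<in> carrier_vec (2*N)" by (rule mult_mat_vec_carrier[OF X x])
    show ?thesis using om_Z[OF Xx y] by simp
  qed
  finally show ?thesis .
qed

lemma adj_carrier: "U \<in> carrier_mat n m \<Longrightarrow> mat_adjoint U \<in> carrier_mat m n"
  unfolding mat_adjoint_def by auto

lemma adj_entry: "U \<in> carrier_mat n m \<Longrightarrow> i < m \<Longrightarrow> j < n \<Longrightarrow> mat_adjoint U $$ (i, j) = cnj (U $$ (j, i))"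
  unfolding mat_adjoint_def mat_of_rows_def by (auto simp: conjugate_complex_def)

lemma adj_mult_entry: assumes U: "U \<in> carrier_mat n n" and X: "X \<in> carrier_mat n n" and a: "a < n" and b: "b < n"
  shows "(mat_adjoint U * X * U) $$ (a, b) = ip n (col U a) (X *\<^sub>v col U b)"
proof -
  have AU: "mat_adjoint U \<in> carrier_mat n n" by (rule adj_carrier[OF U])
  have "mat_adjoint U * X * U = mat_adjoint U * (X * U)" using AU X U by (simp add: assoc_mult_mat)
  hence "(mat_adjoint U * X * U) $$ (a, b) = row (mat_adjoint U) a \<bullet> col (X * U) b"
    using AU X U a b by simp
  also have "col (X * U) b = X *\<^sub>v col U b" by (rule col_mult2[OF X U b])
  also have "row (mat_adjoint U) a \<bullet> (X *\<^sub>v col U b) = ip n (col U a) (X *\<^sub>v col U b)"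
    unfolding ip_def scalar_prod_def using AU U X a by (auto simp: adj_entry lessThan_atLeast0 intro!: sum.cong)
  finally show ?thesis .
qed

lemma adj_U_entry: assumes U: "U \<in> carrier_mat n n" and a: "a < n" and b: "b < n"
  shows "(mat_adjoint U * U) $$ (a, b) = ip n (col U a) (col U b)"
proof -
  have AU: "mat_adjoint U \<in> carrier_mat n n" by (rule adj_carrier[OF U])
  have "(mat_adjoint U * U) $$ (a, b) = row (mat_adjoint U) a \<bullet> col U b" using AU U a b by simp
  also have "\<dots> = ip n (col U a) (col U b)"
    unfolding ip_def scalar_prod_def using AU U a b by (auto simp: adj_entry lessThan_atLeast0 intro!: sum.cong)
  finally show ?thesis .
qed

lemma sympl_entry: assumes U: "U \<in> carrier_mat (2*N) (2*N)" and a: "a < 2*N" and b: "b < 2*N"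
  shows "(transpose_mat U * Zmat N * U) $$ (a, b) = om N (col U a) (col U b)"
proof -
  have TZ: "transpose_mat U * Zmat N \<in> carrier_mat (2*N) (2*N)" using U by (intro mult_carrier_mat[OF _ Zmat_carrier]) simp
  have "(transpose_mat U * Zmat N * U) $$ (a, b) = (\<Sum>s<2*N. (transpose_mat U * Zmat N) $$ (a, s) * U $$ (s, b))"
    by (rule mult_entry[OF TZ U a b])
  also have "\<dots> = (\<Sum>s<2*N. (if s < N then - U $$ (N + s, a) else U $$ (s - N, a)) * U $$ (s, b))"
  proof (intro sum.cong refl)
    fix s assume "s \<in> {..<2*N}"
    hence s: "s < 2*N" by simp
    have UT: "transpose_mat U \<in> carrier_mat (2*N) (2*N)" using U by simp
    have "(transpose_mat U * Zmat N) $$ (a, s) = (if s < N then - transpose_mat U $$ (a, N + s) else transpose_mat U $$ (a, s - N))"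
      by (rule Zr[OF UT a s])
    also have "\<dots> = (if s < N then - U $$ (N + s, a) else U $$ (s - N, a))" using U a s by auto
    finally show "(transpose_mat U * Zmat N) $$ (a, s) * U $$ (s, b) = (if s < N then - U $$ (N + s, a) else U $$ (s - N, a)) * U $$ (s, b)" by simp
  qed
  also have "\<dots> = om N (col U a) (col U b)"
    unfolding sum_split2 om_def using U a b by (simp add: sum_subtractf sum_negf algebra_simps)
  finally show ?thesis .
qed


definition good :: "nat \<Rightarrow> (nat \<Rightarrow> complex mat) \<Rightarrow> nat \<Rightarrow> (nat \<Rightarrow> complex vec) \<Rightarrow> nat \<Rightarrow> bool" where
  "good N X k u b \<longleftrightarrow> (\<forall>i<b. u i \<in> carrier_vec (2*N)) \<and>
     (\<forall>i<b. \<forall>l<b. ip (2*N) (u i) (u l) = (if i = l then 1 else 0)) \<and>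
     (\<forall>i<b. \<forall>l<b. om N (u i) (u l) = 0) \<and>
     (\<forall>j<k. \<forall>i<b. \<exists>c. X j *\<^sub>v u i = lc (2*N) u (Suc i) c)"

lemma ip_smult1: "ip n (a \<cdot>\<^sub>v x) y = cnj a * ip n x y" if "x \<in> carrier_vec n"
  using that unfolding ip_def by (simp add: sum_distrib_left algebra_simps)

lemma sum_kron: "(l::nat) < b \<Longrightarrow> (\<Sum>i<b. f i * (if l = i then 1 else (0::complex))) = f l"
proof -
  assume l: "l < b"
  have "(\<Sum>i<b. f i * (if l = i then 1 else (0::complex))) = (\<Sum>i<b. if i = l then f i else 0)"
    by (intro sum.cong) auto
  also have "\<dots> = f l" using l by (subst sum.delta) auto
  finally show ?thesis .
qed

lemma witness:
  assumes bN: "b < N" and uc: "\<forall>i<b. u i \<in> carrier_vec (2*N)"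
  shows "\<exists>y. y \<in> carrier_vec (2*N) \<and> y \<noteq> 0\<^sub>v (2*N) \<and> (\<forall>i<b. ip (2*N) (u i) y = 0 \<and> om N (u i) y = 0)"
proof -
  define rw where "rw r = (if r < b then vec (2*N) (\<lambda>s. cnj (u r $ s))
     else if r < 2*b then vec (2*N) (\<lambda>s. if s < N then - u (r-b) $ (N+s) else u (r-b) $ (s-N)) else 0\<^sub>v (2*N))" for r
  define K where "K = mat\<^sub>r (2*N) (2*N) (\<lambda>r. if r = 2*b then 0\<^sub>v (2*N) else rw r)"
  have Kc: "K \<in> carrier_mat (2*N) (2*N)" unfolding K_def by simp
  have "det K = 0" unfolding K_def using bN by (intro det_row_0) (auto simp: rw_def)
  then obtain y where y: "y \<in> carrier_vec (2*N)" "y \<noteq> 0\<^sub>v (2*N)" "K *\<^sub>v y = 0\<^sub>v (2*N)"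
    using det_0_iff_vec_prod_zero_field[OF Kc] by blast
  have "ip (2*N) (u i) y = 0 \<and> om N (u i) y = 0" if i: "i < b" for i
  proof
    have "0 = (K *\<^sub>v y) $ i" using y(3) i bN by simp
    also have "\<dots> = (\<Sum>s<2*N. K $$ (i, s) * y $ s)" using mv_entry[OF Kc y(1)] i bN by simp
    also have "\<dots> = ip (2*N) (u i) y" unfolding ip_def using i bN
      by (intro sum.cong) (auto simp: K_def rw_def)
    finally show "ip (2*N) (u i) y = 0" by simp
  next
    have "0 = (K *\<^sub>v y) $ (b+i)" using y(3) i bN by simp
    also have "\<dots> = (\<Sum>s<2*N. K $$ (b+i, s) * y $ s)" using mv_entry[OF Kc y(1)] i bN by simp
    also have "\<dots> = (\<Sum>s<2*N. (if s < N then - u i $ (N+s) else u i $ (s-N)) * y $ s)" using i bN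
      by (intro sum.cong) (auto simp: K_def rw_def)
    also have "\<dots> = om N (u i) y" unfolding sum_split2 om_def
      by (simp add: sum_subtractf sum_negf algebra_simps)
    finally show "om N (u i) y = 0" by simp
  qed
  thus ?thesis using y by blast
qed

lemma ip_self_pos: assumes x: "x \<in> carrier_vec n" and nz: "x \<noteq> 0\<^sub>v n"
  shows "Re (ip n x x) > 0 \<and> ip n x x = complex_of_real (Re (ip n x x))"
proof -
  let ?S = "\<Sum>r<n. (cmod (x $ r))^2"
  have e: "ip n x x = complex_of_real ?S" by (rule ip_self_real)
  have "?S \<ge> 0" by (intro sum_nonneg) auto
  moreover have "?S \<noteq> 0"
  proof
    assume "?S = 0"
    hence "ip n x x = 0" using e by (metis of_real_0)
    thus False using ip_self_zero[OF x] nz by blast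
  qed
  moreover have "Re (ip n x x) = ?S" using e by (metis Re_complex_of_real)
  ultimately show ?thesis using e by auto
qed


lemma step:
  assumes dims: "\<forall>j<k. X j \<in> carrier_mat (2*N) (2*N)"
    and comm: "\<forall>i<k. \<forall>j<k. X i * X j = X j * X i"
    and sd: "\<forall>j<k. sharp N (X j) = X j"
    and g: "good N X k u b" and bN: "b < N"
  shows "\<exists>v. good N X k (u(b:=v)) (Suc b)"
proof -
  have uc: "\<forall>i<b. u i \<in> carrier_vec (2*N)"
    and orth: "\<forall>i<b. \<forall>l<b. ip (2*N) (u i) (u l) = (if i = l then 1 else 0)"
    and iso: "\<forall>i<b. \<forall>l<b. om N (u i) (u l) = 0"
    and inv: "\<forall>j<k. \<forall>i<b. \<exists>c. X j *\<^sub>v u i = lc (2*N) u (Suc i) c"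
    using g unfolding good_def by auto
  define V where "V = {lc (2*N) u b c | c. True}"
  define W where "W = {x \<in> carrier_vec (2*N). \<forall>i<b. om N (u i) x = 0}"
  have V: "subsp (2*N) V" unfolding subsp_def V_def
  proof (intro conjI ballI allI)
    show "{lc (2*N) u b c | c. True} \<subseteq> carrier_vec (2*N)" by auto
    show "0\<^sub>v (2*N) \<in> {lc (2*N) u b c | c. True}" by (auto intro!: exI[of _ "\<lambda>i. 0"] simp: lc_zero)
  next
    fix x y assume "x \<in> {lc (2*N) u b c | c. True}" "y \<in> {lc (2*N) u b c | c. True}"
    then show "x + y \<in> {lc (2*N) u b c | c. True}" using lc_add by blast
  next
    fix a x assume "x \<in> {lc (2*N) u b c | c. True}"
    then show "a \<cdot>\<^sub>v x \<in> {lc (2*N) u b c | c. True}" using lc_smult by blast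
  qed
  have W: "subsp (2*N) W" unfolding subsp_def W_def
    by (auto simp: om_add2 om_smult2 om_zero2)
  have VW: "V \<subseteq> W" unfolding V_def W_def
    using iso by (auto simp: om_lc intro!: sum.neutral)
  have inv_u: "\<forall>j<k. \<forall>i<b. \<exists>d. X j *\<^sub>v u i = lc (2*N) u b d"
  proof (intro allI impI)
    fix j i assume j: "j < k" and i: "i < b"
    obtain c where "X j *\<^sub>v u i = lc (2*N) u (Suc i) c" using inv j i by blast
    also have "\<dots> = lc (2*N) u b (\<lambda>l. if l < Suc i then c l else 0)" using i by (intro lc_extend) simp
    finally show "\<exists>d. X j *\<^sub>v u i = lc (2*N) u b d" by blast
  qed
  have iV: "\<forall>j<k. \<forall>x\<in>V. X j *\<^sub>v x \<in> V"
  proof (intro allI impI ballI)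
    fix j x assume j: "j < k" and x: "x \<in> V"
    obtain c where xc: "x = lc (2*N) u b c" using x unfolding V_def by blast
    have "\<forall>i. \<exists>d. i < b \<longrightarrow> X j *\<^sub>v u i = lc (2*N) u b d" using inv_u j by blast
    then obtain d where d: "\<forall>i. i < b \<longrightarrow> X j *\<^sub>v u i = lc (2*N) u b (d i)" by metis
    have "X j *\<^sub>v x = lc (2*N) (\<lambda>i. X j *\<^sub>v u i) b c" unfolding xc using dims j uc by (intro mat_lc) auto
    also have "\<dots> = lc (2*N) u b (\<lambda>l. \<Sum>i<b. c i * d i l)" using d by (intro lc_lc) auto
    finally show "X j *\<^sub>v x \<in> V" unfolding V_def by blast
  qed
  have iW: "\<forall>j<k. \<forall>x\<in>W. X j *\<^sub>v x \<in> W"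
  proof (intro allI impI ballI)
    fix j x assume j: "j < k" and x: "x \<in> W"
    have Xj: "X j \<in> carrier_mat (2*N) (2*N)" using dims j by simp
    have xc: "x \<in> carrier_vec (2*N)" using x unfolding W_def by simp
    have "om N (u i) (X j *\<^sub>v x) = 0" if i: "i < b" for i
    proof -
      obtain d where d: "X j *\<^sub>v u i = lc (2*N) u b d" using inv_u j i by blast
      have "om N (u i) (X j *\<^sub>v x) = om N (X j *\<^sub>v u i) x"
        using om_sym[OF Xj _ _ xc, of "u i"] sd j uc i by simp
      also have "\<dots> = (\<Sum>l<b. d l * om N (u l) x)" unfolding d by (rule om_lc_left)
      also have "\<dots> = 0" using x unfolding W_def by (auto intro!: sum.neutral)
      finally show ?thesis .
    qed
    thus "X j *\<^sub>v x \<in> W" unfolding W_def using mult_mat_vec_carrier[OF Xj xc] by blast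
  qed
  obtain y0 where y0: "y0 \<in> carrier_vec (2*N)" "y0 \<noteq> 0\<^sub>v (2*N)"
     "\<forall>i<b. ip (2*N) (u i) y0 = 0 \<and> om N (u i) y0 = 0"
    using witness[OF bN uc] by blast
  have y0W: "y0 \<in> W" unfolding W_def using y0 by auto
  have y0V: "y0 \<notin> V"
  proof
    assume "y0 \<in> V"
    then obtain c where c: "y0 = lc (2*N) u b c" unfolding V_def by blast
    have "ip (2*N) y0 y0 = (\<Sum>i<b. c i * ip (2*N) y0 (u i))" by (subst (2) c) (rule ip_lc)
    also have "\<dots> = 0" using y0(3) by (auto intro!: sum.neutral simp: ip_cnj[of _ y0])
    finally show False using ip_self_zero[OF y0(1)] y0(2) by blast
  qed
  obtain x where x: "x \<in> W" "x \<notin> V" "\<forall>j<k. \<exists>\<mu>. X j *\<^sub>v x - \<mu> \<cdot>\<^sub>v x \<in> V"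
    using common_eig[OF dims comm V iV W VW iW y0W y0V] by blast
  have xc: "x \<in> carrier_vec (2*N)" using x(1) unfolding W_def by simp
  define p where "p = lc (2*N) u b (\<lambda>i. ip (2*N) (u i) x)"
  have pV: "p \<in> V" unfolding p_def V_def by blast
  have pc: "p \<in> carrier_vec (2*N)" unfolding p_def by simp
  define x' where "x' = x - p"
  have x'c: "x' \<in> carrier_vec (2*N)" unfolding x'_def using xc pc by simp
  have x'W: "x' \<in> W" unfolding x'_def using subsp_minus[OF W x(1)] pV VW by blast
  have x'V: "x' \<notin> V"
  proof
    assume "x' \<in> V"
    hence "x' + p \<in> V" using V pV unfolding subsp_def by blast
    moreover have "x' + p = x" unfolding x'_def using xc pc by (intro eq_vecI) auto
    ultimately show False using x(2) by simp
  qed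
  have x'orth: "ip (2*N) (u l) x' = 0" if l: "l < b" for l
  proof -
    have "ip (2*N) (u l) p = (\<Sum>i<b. ip (2*N) (u i) x * ip (2*N) (u l) (u i))"
      unfolding p_def by (rule ip_lc)
    also have "\<dots> = (\<Sum>i<b. ip (2*N) (u i) x * (if l = i then 1 else 0))"
      using orth l by (intro sum.cong) auto
    also have "\<dots> = ip (2*N) (u l) x" using l by (rule sum_kron)
    finally show ?thesis unfolding x'_def using ip_minus2[OF xc pc] by simp
  qed
  have x'eig: "\<forall>j<k. \<exists>\<mu>. X j *\<^sub>v x' - \<mu> \<cdot>\<^sub>v x' \<in> V"
  proof (intro allI impI)
    fix j assume j: "j < k"
    have Xj: "X j \<in> carrier_mat (2*N) (2*N)" using dims j by simp
    obtain \<mu> where mu: "X j *\<^sub>v x - \<mu> \<cdot>\<^sub>v x \<in> V" using x(3) j by blast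
    have "X j *\<^sub>v p \<in> V" using iV j pV by blast
    moreover have "\<mu> \<cdot>\<^sub>v p \<in> V" using V pV unfolding subsp_def by blast
    ultimately have pe: "X j *\<^sub>v p - \<mu> \<cdot>\<^sub>v p \<in> V" using subsp_minus[OF V] by blast
    have eq: "X j *\<^sub>v x' - \<mu> \<cdot>\<^sub>v x' = (X j *\<^sub>v x - \<mu> \<cdot>\<^sub>v x) - (X j *\<^sub>v p - \<mu> \<cdot>\<^sub>v p)"
      unfolding x'_def using Xj xc pc
      by (subst mult_minus_distrib_mat_vec[OF Xj xc pc]) (auto intro!: eq_vecI simp: algebra_simps)
    have "X j *\<^sub>v x' - \<mu> \<cdot>\<^sub>v x' \<in> V" unfolding eq by (rule subsp_minus[OF V mu pe])
    thus "\<exists>\<mu>. X j *\<^sub>v x' - \<mu> \<cdot>\<^sub>v x' \<in> V" by blast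
  qed
  have x'nz: "x' \<noteq> 0\<^sub>v (2*N)" using x'V V unfolding subsp_def by blast
  define S where "S = Re (ip (2*N) x' x')"
  have S: "S > 0" "ip (2*N) x' x' = complex_of_real S" using ip_self_pos[OF x'c x'nz] unfolding S_def by auto
  define a where "a = complex_of_real (1 / sqrt S)"
  define v where "v = a \<cdot>\<^sub>v x'"
  have vc: "v \<in> carrier_vec (2*N)" unfolding v_def using x'c by simp
  have vW: "v \<in> W" unfolding v_def using W x'W unfolding subsp_def by blast
  have vorth: "ip (2*N) (u l) v = 0" if "l < b" for l
    unfolding v_def using ip_smult2[OF x'c] x'orth[OF that] by simp
  have vnorm: "ip (2*N) v v = 1"
  proof -
    have "ip (2*N) v v = cnj a * (a * ip (2*N) x' x')" unfolding v_def
      using ip_smult1[OF x'c] ip_smult2[OF x'c] x'c by simp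
    also have "\<dots> = complex_of_real (1 / sqrt S) * (complex_of_real (1 / sqrt S) * complex_of_real S)"
      unfolding a_def S(2) complex_cnj_complex_of_real by (rule refl)
    also have "\<dots> = complex_of_real ((1 / sqrt S) * ((1 / sqrt S) * S))" by (simp only: of_real_mult)
    also have "(1 / sqrt S) * ((1 / sqrt S) * S) = 1"
    proof -
      have "sqrt S * sqrt S = S" using S(1) by simp
      thus ?thesis using S(1) by (simp add: field_simps)
    qed
    finally show ?thesis by simp
  qed
  have veig: "\<forall>j<k. \<exists>\<mu>. X j *\<^sub>v v - \<mu> \<cdot>\<^sub>v v \<in> V"
  proof (intro allI impI)
    fix j assume j: "j < k"
    have Xj: "X j \<in> carrier_mat (2*N) (2*N)" using dims j by simp
    obtain \<mu> where mu: "X j *\<^sub>v x' - \<mu> \<cdot>\<^sub>v x' \<in> V" using x'eig j by blast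
    have "X j *\<^sub>v v - \<mu> \<cdot>\<^sub>v v = a \<cdot>\<^sub>v (X j *\<^sub>v x' - \<mu> \<cdot>\<^sub>v x')"
      unfolding v_def using Xj x'c
      by (subst mult_mat_vec[OF Xj x'c]) (auto intro!: eq_vecI simp: algebra_simps)
    hence "X j *\<^sub>v v - \<mu> \<cdot>\<^sub>v v \<in> V" using mu V unfolding subsp_def by simp
    thus "\<exists>\<mu>. X j *\<^sub>v v - \<mu> \<cdot>\<^sub>v v \<in> V" by blast
  qed
  let ?u = "u(b := v)"
  have "good N X k ?u (Suc b)"
    unfolding good_def
  proof (intro conjI allI impI)
    fix i assume "i < Suc b"
    thus "?u i \<in> carrier_vec (2*N)" using uc vc by (auto simp: less_Suc_eq)
  next
    fix i l assume i: "i < Suc b" and l: "l < Suc b"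
    show "ip (2*N) (?u i) (?u l) = (if i = l then 1 else 0)"
    proof (cases "i = b")
      case True
      show ?thesis
      proof (cases "l = b")
        case True
        then show ?thesis using \<open>i = b\<close> vnorm by simp
      next
        case False
        hence "l < b" using l by simp
        then show ?thesis using \<open>i = b\<close> False vorth[of l] ip_cnj[of "2*N" v "u l"] by simp
      qed
    next
      case False
      hence ib: "i < b" using i by simp
      show ?thesis
      proof (cases "l = b")
        case True
        then show ?thesis using False ib vorth by simp
      next
        case False
        then show ?thesis using \<open>i \<noteq> b\<close> ib l orth by simp
      qed
    qed
  next
    fix i l assume i: "i < Suc b" and l: "l < Suc b"
    have vW': "\<forall>i<b. om N (u i) v = 0" using vW unfolding W_def by simp
    show "om N (?u i) (?u l) = 0"
    proof (cases "i = b")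
      case True
      show ?thesis
      proof (cases "l = b")
        case True
        then show ?thesis using \<open>i = b\<close> om_self by simp
      next
        case False
        hence "l < b" using l by simp
        then show ?thesis using \<open>i = b\<close> False vW' om_antisym[of N v "u l"] by simp
      qed
    next
      case False
      hence ib: "i < b" using i by simp
      show ?thesis
      proof (cases "l = b")
        case True
        then show ?thesis using False ib vW' by simp
      next
        case False
        then show ?thesis using \<open>i \<noteq> b\<close> ib l iso by simp
      qed
    qed
  next
    fix j i assume j: "j < k" and i: "i < Suc b"
    show "\<exists>c. X j *\<^sub>v ?u i = lc (2*N) ?u (Suc i) c"
    proof (cases "i = b")
      case False
      hence ib: "i < b" using i by simp
      obtain c where c: "X j *\<^sub>v u i = lc (2*N) u (Suc i) c" using inv j ib by blast
      have "lc (2*N) u (Suc i) c = lc (2*N) ?u (Suc i) c" using ib by (intro lc_cong) auto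
      thus ?thesis using c False by auto
    next
      case True
      have Xj: "X j \<in> carrier_mat (2*N) (2*N)" using dims j by simp
      obtain \<mu> where mu: "X j *\<^sub>v v - \<mu> \<cdot>\<^sub>v v \<in> V" using veig j by blast
      then obtain c where c: "X j *\<^sub>v v - \<mu> \<cdot>\<^sub>v v = lc (2*N) u b c" unfolding V_def by blast
      have "lc (2*N) ?u (Suc b) (c(b := \<mu>)) = lc (2*N) ?u b (c(b := \<mu>)) + \<mu> \<cdot>\<^sub>v v"
        using lc_Suc[of ?u b "2*N" "c(b := \<mu>)"] vc by simp
      also have "lc (2*N) ?u b (c(b := \<mu>)) = lc (2*N) u b c"
        unfolding lc_def by (intro eq_vecI) auto
      also have "lc (2*N) u b c + \<mu> \<cdot>\<^sub>v v = X j *\<^sub>v v"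
        unfolding c[symmetric] using Xj vc mult_mat_vec_carrier[OF Xj vc] by (intro eq_vecI) auto
      finally have fin: "lc (2*N) ?u (Suc b) (c(b := \<mu>)) = X j *\<^sub>v v" .
      have "X j *\<^sub>v ?u i = lc (2*N) ?u (Suc i) (c(b := \<mu>))" using fin True by simp
      thus ?thesis by blast
    qed
  qed
  thus ?thesis by blast
qed


lemma exists_good:
  assumes dims: "\<forall>j<k. X j \<in> carrier_mat (2*N) (2*N)"
    and comm: "\<forall>i<k. \<forall>j<k. X i * X j = X j * X i"
    and sd: "\<forall>j<k. sharp N (X j) = X j"
  shows "b \<le> N \<Longrightarrow> \<exists>u. good N X k u b"
proof (induction b)
  case 0
  then show ?case unfolding good_def by auto
next
  case (Suc b)
  then obtain u where gu: "good N X k u b" by auto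
  have "b < N" using Suc.prems by simp
  then obtain v where "good N X k (u(b := v)) (Suc b)" using step[OF dims comm sd gu] by blast
  then show ?case by blast
qed

theorem mainTheorem10:
  fixes N k :: nat and X :: "nat \<Rightarrow> complex mat"
  assumes dims: "\<forall>j<k. X j \<in> carrier_mat (2 * N) (2 * N)"
    and comm: "\<forall>i<k. \<forall>j<k. X i * X j = X j * X i"
    and selfdual: "\<forall>j<k. sharp N (X j) = X j"
  shows "\<exists>U. symplectic_unitary N U \<and>
           (\<forall>j<k. \<exists>T C. T \<in> carrier_mat N N \<and> C \<in> carrier_mat N N \<and>
              upper_triangular T \<and> transpose_mat C = - C \<and>
              mat_adjoint U * X j * U = four_block_mat T C (0\<^sub>m N N) (transpose_mat T))"
proof -
  obtain u where g: "good N X k u N" using exists_good[OF dims comm selfdual] by blast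
  have uc: "\<forall>i<N. u i \<in> carrier_vec (2*N)"
    and orth: "\<forall>i<N. \<forall>l<N. ip (2*N) (u i) (u l) = (if i = l then 1 else 0)"
    and iso: "\<forall>i<N. \<forall>l<N. om N (u i) (u l) = 0"
    and inv: "\<forall>j<k. \<forall>i<N. \<exists>c. X j *\<^sub>v u i = lc (2*N) u (Suc i) c"
    using g unfolding good_def by auto
  define cU where "cU c = (if c < N then u c else Jv N (u (c - N)))" for c
  define U where "U = mat (2*N) (2*N) (\<lambda>(r, c). cU c $ r)"
  have cUc: "cU c \<in> carrier_vec (2*N)" if "c < 2*N" for c
    unfolding cU_def using uc that by auto
  have Uc: "U \<in> carrier_mat (2*N) (2*N)" unfolding U_def by simp
  have colU: "col U c = cU c" if c: "c < 2*N" for c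
    unfolding U_def using cUc[OF c] c by (intro eq_vecI) auto
  have unit: "mat_adjoint U * U = 1\<^sub>m (2*N)"
  proof (rule eq_matI)
    fix a b assume a: "a < dim_row (1\<^sub>m (2*N) :: complex mat)" and b: "b < dim_col (1\<^sub>m (2*N) :: complex mat)"
    hence a: "a < 2*N" and b: "b < 2*N" by auto
    have "(mat_adjoint U * U) $$ (a, b) = ip (2*N) (cU a) (cU b)"
      using adj_U_entry[OF Uc a b] colU a b by simp
    also have "\<dots> = (if a = b then 1 else 0)"
    proof (cases "a < N"; cases "b < N")
      assume "a < N" "b < N" thus ?thesis unfolding cU_def using orth by simp
    next
      assume "a < N" "\<not> b < N"
      thus ?thesis unfolding cU_def using iso b by (auto simp: ip_xJ)
    next
      assume "\<not> a < N" "b < N"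
      thus ?thesis unfolding cU_def using iso a by (auto simp: ip_Jx)
    next
      assume "\<not> a < N" "\<not> b < N"
      thus ?thesis unfolding cU_def using orth a b by (auto simp: ipJJ)
    qed
    finally show "(mat_adjoint U * U) $$ (a, b) = 1\<^sub>m (2*N) $$ (a, b)" using a b by simp
  qed (use Uc adj_carrier[OF Uc] in auto)
  have sympl: "transpose_mat U * Zmat N * U = Zmat N"
  proof (rule eq_matI)
    fix a b assume a: "a < dim_row (Zmat N)" and b: "b < dim_col (Zmat N)"
    hence a: "a < 2*N" and b: "b < 2*N" by auto
    have "(transpose_mat U * Zmat N * U) $$ (a, b) = om N (cU a) (cU b)"
      using sympl_entry[OF Uc a b] colU a b by simp
    also have "\<dots> = Zmat N $$ (a, b)"
    proof (cases "a < N"; cases "b < N")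
      assume "a < N" "b < N" thus ?thesis unfolding cU_def using iso a b by (simp add: Zmat_entry)
    next
      assume "a < N" "\<not> b < N"
      thus ?thesis unfolding cU_def using orth a b by (auto simp: om_xJ Zmat_entry)
    next
      assume "\<not> a < N" "b < N"
      thus ?thesis unfolding cU_def using orth a b
        by (auto simp: om_antisym[of N "Jv N _"] om_xJ Zmat_entry)
    next
      assume "\<not> a < N" "\<not> b < N"
      thus ?thesis unfolding cU_def using iso a b by (auto simp: omJJ Zmat_entry)
    qed
    finally show "(transpose_mat U * Zmat N * U) $$ (a, b) = Zmat N $$ (a, b)" .
  qed (use Uc in auto)
  have SU: "symplectic_unitary N U"
    unfolding symplectic_unitary_def unitary_mat_def using Uc unit sympl by simp
  have blocks: "\<exists>T C. T \<in> carrier_mat N N \<and> C \<in> carrier_mat N N \<and>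
              upper_triangular T \<and> transpose_mat C = - C \<and>
              mat_adjoint U * X j * U = four_block_mat T C (0\<^sub>m N N) (transpose_mat T)" if j: "j < k" for j
  proof -
    have Xj: "X j \<in> carrier_mat (2*N) (2*N)" using dims j by simp
    have sdj: "sharp N (X j) = X j" using selfdual j by simp
    define Y where "Y = mat_adjoint U * X j * U"
    have Yc: "Y \<in> carrier_mat (2*N) (2*N)" unfolding Y_def using adj_carrier[OF Uc] Xj Uc by simp
    have Ye: "Y $$ (a, b) = ip (2*N) (cU a) (X j *\<^sub>v cU b)" if "a < 2*N" "b < 2*N" for a b
      unfolding Y_def using adj_mult_entry[OF Uc Xj that] colU that by simp
    have Xu: "\<exists>c. X j *\<^sub>v u i = lc (2*N) u (Suc i) c" if "i < N" for i using inv j that by blast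
    define T where "T = mat N N (\<lambda>(a, b). Y $$ (a, b))"
    define C where "C = mat N N (\<lambda>(a, b). Y $$ (a, N + b))"
    have Tc: "T \<in> carrier_mat N N" and Cc: "C \<in> carrier_mat N N" unfolding T_def C_def by auto
    have JXJ: "Y $$ (a, N + b) = - Y $$ (b, N + a)" if a: "a < N" and b: "b < N" for a b
    proof -
      have Jb: "Jv N (u b) \<in> carrier_vec (2*N)" by simp
      have Ja: "Jv N (u a) \<in> carrier_vec (2*N)" by simp
      have "Y $$ (a, N + b) = ip (2*N) (u a) (X j *\<^sub>v Jv N (u b))"
        using Ye[of a "N+b"] a b unfolding cU_def by simp
      also have "\<dots> = - om N (Jv N (u a)) (X j *\<^sub>v Jv N (u b))" by (rule ip_om_J)
      also have "\<dots> = - om N (X j *\<^sub>v Jv N (u a)) (Jv N (u b))" using om_sym[OF Xj sdj Ja Jb] by simp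
      also have "\<dots> = - ip (2*N) (u b) (X j *\<^sub>v Jv N (u a))" by (simp add: om_xJ)
      also have "\<dots> = - Y $$ (b, N + a)" using Ye[of b "N+a"] a b unfolding cU_def by simp
      finally show ?thesis .
    qed
    have low0: "Y $$ (N + a, b) = 0" if a: "a < N" and b: "b < N" for a b
    proof -
      obtain c where c: "X j *\<^sub>v u b = lc (2*N) u (Suc b) c" using Xu b by blast
      have "Y $$ (N + a, b) = ip (2*N) (Jv N (u a)) (X j *\<^sub>v u b)"
        using Ye[of "N+a" b] a b unfolding cU_def by simp
      also have "\<dots> = om N (u a) (lc (2*N) u (Suc b) c)" by (simp add: ip_Jx c)
      also have "\<dots> = 0" unfolding om_lc using iso a b by (auto intro!: sum.neutral)
      finally show ?thesis .
    qed
    have lowright: "Y $$ (N + a, N + b) = Y $$ (b, a)" if a: "a < N" and b: "b < N" for a b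
    proof -
      have Jb: "Jv N (u b) \<in> carrier_vec (2*N)" by simp
      have ua: "u a \<in> carrier_vec (2*N)" using uc a by simp
      have "Y $$ (N + a, N + b) = ip (2*N) (Jv N (u a)) (X j *\<^sub>v Jv N (u b))"
        using Ye[of "N+a" "N+b"] a b unfolding cU_def by simp
      also have "\<dots> = om N (u a) (X j *\<^sub>v Jv N (u b))" by (rule ip_Jx)
      also have "\<dots> = om N (X j *\<^sub>v u a) (Jv N (u b))" using om_sym[OF Xj sdj ua Jb] .
      also have "\<dots> = ip (2*N) (u b) (X j *\<^sub>v u a)" by (rule om_xJ)
      also have "\<dots> = Y $$ (b, a)" using Ye[of b a] a b unfolding cU_def by simp
      finally show ?thesis .
    qed
    have ut: "upper_triangular T"
      unfolding upper_triangular_def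
    proof (intro allI impI)
      fix a b assume a: "a < dim_row T" and ba: "b < a"
      hence a: "a < N" using Tc by simp
      have b: "b < N" using a ba by simp
      obtain c where c: "X j *\<^sub>v u b = lc (2*N) u (Suc b) c" using Xu b by blast
      have "T $$ (a, b) = ip (2*N) (u a) (lc (2*N) u (Suc b) c)"
        unfolding T_def using Ye[of a b] a b c unfolding cU_def by simp
      also have "\<dots> = 0" unfolding ip_lc using orth a b ba by (auto intro!: sum.neutral)
      finally show "T $$ (a, b) = 0" .
    qed
    have skew: "transpose_mat C = - C"
    proof (rule eq_matI)
      fix a b assume "a < dim_row (- C)" "b < dim_col (- C)"
      hence a: "a < N" and b: "b < N" using Cc by auto
      show "transpose_mat C $$ (a, b) = (- C) $$ (a, b)"
        unfolding C_def using a b JXJ[of b a] by simp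
    qed (use Cc in auto)
    have "Y = four_block_mat T C (0\<^sub>m N N) (transpose_mat T)"
    proof (rule eq_matI)
      fix a b assume a: "a < dim_row (four_block_mat T C (0\<^sub>m N N) (transpose_mat T))"
        and b: "b < dim_col (four_block_mat T C (0\<^sub>m N N) (transpose_mat T))"
      hence a: "a < 2*N" and b: "b < 2*N" using Tc Cc by auto
      show "Y $$ (a, b) = four_block_mat T C (0\<^sub>m N N) (transpose_mat T) $$ (a, b)"
      proof (cases "a < N"; cases "b < N")
        assume "a < N" "b < N" thus ?thesis using Tc Cc unfolding T_def by simp
      next
        assume "a < N" "\<not> b < N" thus ?thesis using Tc Cc b unfolding C_def by simp
      next
        assume "\<not> a < N" "b < N" thus ?thesis using Tc Cc a low0[of "a - N" b] by simp
      next
        assume "\<not> a < N" "\<not> b < N" thus ?thesis using Tc Cc a b lowright[of "a - N" "b - N"]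
          unfolding T_def by simp
      qed
    qed (use Yc Tc Cc in auto)
    thus ?thesis using Tc Cc ut skew unfolding Y_def by blast
  qed
  show ?thesis using SU blocks by blast
qed


end
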